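(* Let $X$, $Z$ be topological vector spaces, $C\subseteq Z$ a nonempty closed convex cone with $C^-\neq\{0\}$, and $f:X\to\mathcal{F}(Z,C)$ convex. If $f$ is lattice-bounded above on some neighborhood of $x_0\in X$, then $f$ is upper lattice-semicontinuous at $x_0$.
   Context: $\mathcal{F}(Z,C)=\{A\subseteq Z\colon A=\operatorname{cl}(A+C)\}$ (empty set included); $C^-=\{z^*\in Z^*\colon z^*(z)\le0\ \forall z\in C\}$. $f$ is convex iff $tf(x_1)+(1-t)f(x_2)\subseteq f(tx_1+(1-t)x_2)$ for all $x_1,x_2\in X$, $t\in(0,1)$. $f$ is lattice-bounded above on $M\subseteq X$ iff there is $a\in Z$ with $a\in f(x)$ for all $x\in M$. $f$ is upper lattice-semicontinuous at $x_0$ iff $f(x_0)\subseteq\operatorname{cl}\bigcup_{U\in\mathcal{N}(x_0)}\bigcap_{x\in U}f(x)$ ($\mathcal{N}(x_0)$ the neighborhoods of $x_0$); equivalently, for every $z_0\in f(x_0)$ and every neighborhood $V$ of $z_0$ there exist $U\in\mathcal{N}(x_0)$ and $z\in V$ with $z\in f(x)$ for all $x\in U$. *)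

theory Defs
  imports "HOL-Analysis.Analysis"
begin

definition tvs :: "'a::{real_vector,topological_space} itself \<Rightarrow> bool" where
  "tvs _ \<longleftrightarrow> continuous_on UNIV (\<lambda>p::'a \<times> 'a. fst p + snd p)
     \<and> continuous_on UNIV (\<lambda>p::real \<times> 'a. fst p *\<^sub>R snd p)"

definition nhds_sets :: "'a::topological_space \<Rightarrow> 'a set set" where
  "nhds_sets x0 = {U. \<exists>V. open V \<and> x0 \<in> V \<and> V \<subseteq> U}"

definition set_sum :: "'a::real_vector set \<Rightarrow> 'a set \<Rightarrow> 'a set" where
  "set_sum A B = {a + b | a b. a \<in> A \<and> b \<in> B}"

text \<open>The family F(Z,C) (empty set included).\<close>
definition upper_sets :: "'z::{real_vector,topological_space} set \<Rightarrow> 'z set set" where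
  "upper_sets C = {A. A = closure (set_sum A C)}"

definition dual_cone :: "'z::{real_vector,topological_space} set \<Rightarrow> ('z \<Rightarrow> real) set" where
  "dual_cone C = {g. linear g \<and> continuous_on UNIV g \<and> (\<forall>z\<in>C. g z \<le> 0)}"

definition sv_convex :: "('x::real_vector \<Rightarrow> 'z::real_vector set) \<Rightarrow> bool" where
  "sv_convex f \<longleftrightarrow> (\<forall>x1 x2 t. 0 < t \<and> t < 1 \<longrightarrow>
     set_sum ((\<lambda>z. t *\<^sub>R z) ` f x1) ((\<lambda>z. (1 - t) *\<^sub>R z) ` f x2)
       \<subseteq> f (t *\<^sub>R x1 + (1 - t) *\<^sub>R x2))"

definition lattice_bounded_above_on :: "('x \<Rightarrow> 'z set) \<Rightarrow> 'x set \<Rightarrow> bool" where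
  "lattice_bounded_above_on f M \<longleftrightarrow> (\<exists>a. \<forall>x\<in>M. a \<in> f x)"

definition upper_lattice_semicontinuous_at ::
    "('x::topological_space \<Rightarrow> 'z::topological_space set) \<Rightarrow> 'x \<Rightarrow> bool" where
  "upper_lattice_semicontinuous_at f x0 \<longleftrightarrow>
     f x0 \<subseteq> closure (\<Union>U\<in>nhds_sets x0. \<Inter>x\<in>U. f x)"

end

theory Submission
  imports Defs
begin

lemma tvs_add_const:
  assumes "tvs TYPE('a::{real_vector,topological_space})"
  shows "continuous_on UNIV (\<lambda>x::'a. x + c)"
proof -
  have "continuous_on UNIV (\<lambda>x::'a. fst (x, c) + snd (x, c))"
    by (rule continuous_on_compose2[of UNIV "\<lambda>p::'a\<times>'a. fst p + snd p"])
       (use assms in \<open>auto simp: tvs_def intro: continuous_intros\<close>)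
  then show ?thesis by simp
qed

lemma tvs_scale_const:
  assumes "tvs TYPE('a::{real_vector,topological_space})"
  shows "continuous_on UNIV (\<lambda>x::'a. r *\<^sub>R x)"
proof -
  have "continuous_on UNIV (\<lambda>x::'a. fst (r, x) *\<^sub>R snd (r, x))"
    by (rule continuous_on_compose2[of UNIV "\<lambda>p::real\<times>'a. fst p *\<^sub>R snd p"])
       (use assms in \<open>auto simp: tvs_def intro: continuous_intros\<close>)
  then show ?thesis by simp
qed

lemma tvs_scale_vec:
  assumes "tvs TYPE('a::{real_vector,topological_space})"
  shows "continuous_on UNIV (\<lambda>s::real. s *\<^sub>R (v::'a))"
proof -
  have "continuous_on UNIV (\<lambda>s::real. fst (s, v) *\<^sub>R snd (s, v))"
    by (rule continuous_on_compose2[of UNIV "\<lambda>p::real\<times>'a. fst p *\<^sub>R snd p"])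
       (use assms in \<open>auto simp: tvs_def intro: continuous_intros\<close>)
  then show ?thesis by simp
qed

theorem mainTheorem7:
  fixes f :: "'x::{real_vector,topological_space} \<Rightarrow> 'z::{real_vector,topological_space} set"
    and C :: "'z set" and x0 :: 'x
  assumes "tvs TYPE('x)" and "tvs TYPE('z)"
    and "C \<noteq> {}" and "closed C" and "convex_cone C"
    and "dual_cone C \<noteq> {(\<lambda>_. 0)}"
    and "\<forall>x. f x \<in> upper_sets C"
    and "sv_convex f"
    and "\<exists>U\<in>nhds_sets x0. lattice_bounded_above_on f U"
  shows "upper_lattice_semicontinuous_at f x0"
  unfolding upper_lattice_semicontinuous_at_def
proof
  fix z0 assume z0: "z0 \<in> f x0"
  obtain U a where U: "U \<in> nhds_sets x0" and a: "\<forall>x\<in>U. a \<in> f x"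
    using assms(9) unfolding lattice_bounded_above_on_def by blast
  obtain U' where U': "open U'" "x0 \<in> U'" "U' \<subseteq> U"
    using U unfolding nhds_sets_def by blast
  show "z0 \<in> closure (\<Union>U\<in>nhds_sets x0. \<Inter>x\<in>U. f x)"
    unfolding closure_iff_nhds_not_empty
  proof (intro allI impI)
    fix A V assume VA: "V \<subseteq> A" and V: "open V" and z0V: "z0 \<in> V"
    define h where "h = (\<lambda>s::real. (\<lambda>y. y + z0) (s *\<^sub>R (a - z0)))"
    have hc: "continuous_on UNIV h"
      unfolding h_def
      by (rule continuous_on_compose2[OF tvs_add_const[OF assms(2)] tvs_scale_vec[OF assms(2)]]) auto
    have "open (h -` V)"
      using hc V by (metis continuous_on_open_vimage open_UNIV Int_UNIV_right)
    moreover have "0 \<in> h -` V" using z0V by (simp add: h_def)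
    ultimately obtain e where e: "e > 0" "ball 0 e \<subseteq> h -` V"
      using open_contains_ball by blast
    define s where "s = min (e/2) (1/2::real)"
    have s: "0 < s" "s < 1" "s < e" using e by (auto simp: s_def)
    have "s \<in> ball 0 e" using s by (simp add: dist_real_def)
    then have "h s \<in> V" using e by blast
    define z where "z = (1 - s) *\<^sub>R z0 + s *\<^sub>R a"
    have zV: "z \<in> V"
      using \<open>h s \<in> V\<close> by (simp add: h_def z_def algebra_simps)
    define g where "g = (\<lambda>x::'x. (\<lambda>y. y + (1 - 1/s) *\<^sub>R x0) ((1/s) *\<^sub>R x))"
    have gc: "continuous_on UNIV g"
      unfolding g_def
      by (rule continuous_on_compose2[OF tvs_add_const[OF assms(1)] tvs_scale_const[OF assms(1)]]) auto
    define W where "W = g -` U'"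
    have "open W"
      using gc U'(1) unfolding W_def by (metis continuous_on_open_vimage open_UNIV Int_UNIV_right)
    moreover have "x0 \<in> W"
      using U'(2) s by (simp add: W_def g_def algebra_simps)
    ultimately have Wn: "W \<in> nhds_sets x0" unfolding nhds_sets_def by blast
    have "z \<in> f x" if xW: "x \<in> W" for x
    proof -
      have "g x \<in> U" using xW U'(3) by (auto simp: W_def)
      then have ag: "a \<in> f (g x)" using a by blast
      have "set_sum ((\<lambda>z. (1 - s) *\<^sub>R z) ` f x0) ((\<lambda>z. (1 - (1 - s)) *\<^sub>R z) ` f (g x))
          \<subseteq> f ((1 - s) *\<^sub>R x0 + (1 - (1 - s)) *\<^sub>R g x)"
      proof -
        have "0 < 1 - s" "1 - s < 1" using s by auto
        then show ?thesis using assms(8) unfolding sv_convex_def by blast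
      qed
      moreover have "(1 - s) *\<^sub>R x0 + (1 - (1 - s)) *\<^sub>R g x = x"
        using s by (simp add: g_def algebra_simps)
      moreover have "z \<in> set_sum ((\<lambda>z. (1 - s) *\<^sub>R z) ` f x0) ((\<lambda>z. (1 - (1 - s)) *\<^sub>R z) ` f (g x))"
        unfolding set_sum_def z_def using z0 ag by auto
      ultimately show ?thesis by auto
    qed
    then have "z \<in> (\<Union>U\<in>nhds_sets x0. \<Inter>x\<in>U. f x)" using Wn by blast
    then show "(\<Union>U\<in>nhds_sets x0. \<Inter>x\<in>U. f x) \<inter> A \<noteq> {}" using zV VA by blast
  qed
qed

end
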